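(* Let $X$ be a nonempty set and $d$ a reflexive triangular symmetric on $X$ such that $(X,d)$ is 0-complete. Let $T:X\to X$, $G\in\{M_1,M_2,M_3\}$, and suppose $d(Tx,Ty)\le\varphi(G(x,y))$ for all $x,y\in X$, for some asymptotic normal function $\varphi:[0,\infty)\to[0,\infty)$. Then $T$ is $d$-asymptotic, i.e. $\lim_n d(T^nx,T^{n+1}x)=0$ for every $x\in X$.
   Context: A symmetric on $X$ is a map $d:X\times X\to[0,\infty)$ with $d(x,y)=d(y,x)$; it is reflexive triangular if $d(x,z)+d(y,y)\le d(x,y)+d(y,z)$ for all $x,y,z\in X$. A sequence $(x_n)$ $0d$-converges to $x$ if $d(x_n,x)\to 0$; it is $0d$-Cauchy if for every $\varepsilon>0$ there is $j$ with $d(x_m,x_n)<\varepsilon$ whenever $j\le m<n$; $(X,d)$ is 0-complete if every $0d$-Cauchy sequence $0d$-converges to some point. Notation: $M_1(x,y)=d(x,y)$, $H(x,y)=\max\{d(x,Tx),d(y,Ty)\}$, $L(x,y)=\frac12[d(x,Ty)+d(Tx,y)]$, $M_2=\max\{M_1,H\}$, $M_3=\max\{M_1,H,L\}$. $\varphi$ is normal if $\varphi(0)=0$ and $\varphi(t)<t$ for $t>0$; it is asymptotic normal if it is normal and every sequence $(r_n)$ in $[0,\infty)$ with $r_{n+1}\le\varphi(r_n)$ for all $n$ satisfies $r_n\to0$. *)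

theory Defs
  imports Complex_Main
begin

definition symmetric_on :: "'a set \<Rightarrow> ('a \<Rightarrow> 'a \<Rightarrow> real) \<Rightarrow> bool" where
  "symmetric_on X d \<longleftrightarrow> (\<forall>x\<in>X. \<forall>y\<in>X. d x y \<ge> 0 \<and> d x y = d y x)"

definition reflexive_triangular :: "'a set \<Rightarrow> ('a \<Rightarrow> 'a \<Rightarrow> real) \<Rightarrow> bool" where
  "reflexive_triangular X d \<longleftrightarrow>
     (\<forall>x\<in>X. \<forall>y\<in>X. \<forall>z\<in>X. d x z + d y y \<le> d x y + d y z)"

definition zero_converges :: "('a \<Rightarrow> 'a \<Rightarrow> real) \<Rightarrow> (nat \<Rightarrow> 'a) \<Rightarrow> 'a \<Rightarrow> bool" where
  "zero_converges d s x \<longleftrightarrow> (\<lambda>n. d (s n) x) \<longlonglongrightarrow> 0"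

definition zero_cauchy :: "('a \<Rightarrow> 'a \<Rightarrow> real) \<Rightarrow> (nat \<Rightarrow> 'a) \<Rightarrow> bool" where
  "zero_cauchy d s \<longleftrightarrow> (\<forall>e>0. \<exists>j. \<forall>m n. j \<le> m \<and> m < n \<longrightarrow> d (s m) (s n) < e)"

definition zero_complete :: "'a set \<Rightarrow> ('a \<Rightarrow> 'a \<Rightarrow> real) \<Rightarrow> bool" where
  "zero_complete X d \<longleftrightarrow>
     (\<forall>s. (\<forall>n. s n \<in> X) \<and> zero_cauchy d s \<longrightarrow> (\<exists>x\<in>X. zero_converges d s x))"

definition M1 :: "('a \<Rightarrow> 'a \<Rightarrow> real) \<Rightarrow> ('a \<Rightarrow> 'a) \<Rightarrow> 'a \<Rightarrow> 'a \<Rightarrow> real" where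
  "M1 d T x y = d x y"

definition Hf :: "('a \<Rightarrow> 'a \<Rightarrow> real) \<Rightarrow> ('a \<Rightarrow> 'a) \<Rightarrow> 'a \<Rightarrow> 'a \<Rightarrow> real" where
  "Hf d T x y = max (d x (T x)) (d y (T y))"

definition Lf :: "('a \<Rightarrow> 'a \<Rightarrow> real) \<Rightarrow> ('a \<Rightarrow> 'a) \<Rightarrow> 'a \<Rightarrow> 'a \<Rightarrow> real" where
  "Lf d T x y = (d x (T y) + d (T x) y) / 2"

definition M2 :: "('a \<Rightarrow> 'a \<Rightarrow> real) \<Rightarrow> ('a \<Rightarrow> 'a) \<Rightarrow> 'a \<Rightarrow> 'a \<Rightarrow> real" where
  "M2 d T x y = max (M1 d T x y) (Hf d T x y)"

definition M3 :: "('a \<Rightarrow> 'a \<Rightarrow> real) \<Rightarrow> ('a \<Rightarrow> 'a) \<Rightarrow> 'a \<Rightarrow> 'a \<Rightarrow> real" where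
  "M3 d T x y = max (max (M1 d T x y) (Hf d T x y)) (Lf d T x y)"

text \<open>phi maps [0,inf) to [0,inf); only its values on [0,inf) matter.\<close>
definition normal_fun :: "(real \<Rightarrow> real) \<Rightarrow> bool" where
  "normal_fun \<phi> \<longleftrightarrow> (\<forall>t\<ge>0. \<phi> t \<ge> 0) \<and> \<phi> 0 = 0 \<and> (\<forall>t>0. \<phi> t < t)"

definition asymptotic_normal :: "(real \<Rightarrow> real) \<Rightarrow> bool" where
  "asymptotic_normal \<phi> \<longleftrightarrow> normal_fun \<phi> \<and>
     (\<forall>r::nat \<Rightarrow> real. (\<forall>n. r n \<ge> 0) \<and> (\<forall>n. r (Suc n) \<le> \<phi> (r n)) \<longrightarrow> r \<longlonglongrightarrow> 0)"

end

theory Submission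
  imports Defs
begin

theorem lemma3:
  fixes X :: "'a set" and d :: "'a \<Rightarrow> 'a \<Rightarrow> real" and T :: "'a \<Rightarrow> 'a"
    and G :: "'a \<Rightarrow> 'a \<Rightarrow> real" and \<phi> :: "real \<Rightarrow> real"
  assumes "X \<noteq> {}"
    and "symmetric_on X d"
    and "reflexive_triangular X d"
    and "zero_complete X d"
    and "\<forall>x\<in>X. T x \<in> X"
    and "G \<in> {M1 d T, M2 d T, M3 d T}"
    and "asymptotic_normal \<phi>"
    and "\<forall>x\<in>X. \<forall>y\<in>X. d (T x) (T y) \<le> \<phi> (G x y)"
  shows "\<forall>x\<in>X. (\<lambda>n. d ((T ^^ n) x) ((T ^^ Suc n) x)) \<longlonglongrightarrow> 0"
proof
  fix x assume x: "x \<in> X"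
  have inX: "(T ^^ n) x \<in> X" for n
    by (induction n) (use x assms(5) in auto)
  have nf: "normal_fun \<phi>" and an: "\<forall>r::nat \<Rightarrow> real. (\<forall>n. r n \<ge> 0) \<and> (\<forall>n. r (Suc n) \<le> \<phi> (r n)) \<longrightarrow> r \<longlonglongrightarrow> 0"
    using assms(7) unfolding asymptotic_normal_def by auto
  have step: "d b c \<le> \<phi> (d a b)" if a: "a \<in> X" and b: "b = T a" and c: "c = T b" for a b c
  proof -
    have bX: "b \<in> X" and cX: "c \<in> X" using a b c assms(5) by auto
    have nn: "d a b \<ge> 0" "d b c \<ge> 0" "d b b \<ge> 0" "d a c \<ge> 0"
      using assms(2) a bX cX unfolding symmetric_on_def by auto
    have tri: "d a c + d b b \<le> d a b + d b c"
      using assms(3) a bX cX unfolding reflexive_triangular_def by auto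
    have sym: "d c b = d b c" using assms(2) bX cX unfolding symmetric_on_def by auto
    have le: "d b c \<le> \<phi> (G a b)" using assms(8) a bX b c by auto
    have G: "G a b = d a b \<or> G a b = max (d a b) (d b c)"
    proof -
      have H: "Hf d T a b = max (d a b) (d b c)" unfolding Hf_def using b c by simp
      have L: "Lf d T a b \<le> max (d a b) (d b c)" unfolding Lf_def using b c tri sym nn by simp
      show ?thesis using assms(6) H L unfolding M1_def M2_def M3_def by auto
    qed
    show ?thesis
    proof (cases "d b c \<le> d a b")
      case True then show ?thesis using G le by (auto simp: max_def)
    next
      case False
      then have pos: "d b c > 0" using nn by linarith
      have "G a b = d a b \<or> G a b = d b c" using G False by (auto simp: max_def)
      moreover have "\<phi> (d b c) < d b c" using nf pos unfolding normal_fun_def by auto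
      ultimately show ?thesis using le False by auto
    qed
  qed
  show "(\<lambda>n. d ((T ^^ n) x) ((T ^^ Suc n) x)) \<longlonglongrightarrow> 0"
  proof (rule an[rule_format], intro conjI allI)
    fix n
    show "d ((T ^^ n) x) ((T ^^ Suc n) x) \<ge> 0"
      using assms(2) inX[of n] inX[of "Suc n"] unfolding symmetric_on_def by auto
    show "d ((T ^^ Suc n) x) ((T ^^ Suc (Suc n)) x) \<le> \<phi> (d ((T ^^ n) x) ((T ^^ Suc n) x))"
      using step[OF inX[of n]] by simp
  qed
qed

end
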